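(* Let $(M,\mathscr{F}_M,\mu)$ be a $\sigma$-finite measure space, $\mathscr{F}_{fin}=\{A\in\mathscr{F}_M:0<\mu(A)<\infty\}$, and $K^{(\mu)}(A,B)=\mu(A\cap B)$ for $A,B\in\mathscr{F}_{fin}$. A function $\Phi$ on $\mathscr{F}_{fin}$ belongs to the reproducing kernel Hilbert space $\mathscr{H}(K^{(\mu)})$ if and only if there is $\varphi\in L^2(M,\mathscr{F}_M,\mu)$ with $\Phi(A)=\int_A\varphi\,d\mu$ for all $A\in\mathscr{F}_{fin}$; in that case $\|\Phi\|_{\mathscr{H}(K^{(\mu)})}=\|\varphi\|_{L^2(\mu)}$.
   Context: $K^{(\mu)}$ is a positive definite kernel on $\mathscr{F}_{fin}$. For a positive definite kernel $K$ on a set $Y$, $\mathscr{H}(K)$ is the completion of the span of $\{K(\cdot,y)\}_{y\in Y}$ under $\langle K(\cdot,x),K(\cdot,y)\rangle=K(x,y)$, realized as functions on $Y$ with the reproducing property $\langle K(\cdot,y),h\rangle=h(y)$. *)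

theory Defs
  imports "HOL-Analysis.Analysis" "HOL-Probability.Probability"
begin

text \<open>Reproducing kernel Hilbert space H(K) of a positive definite kernel K on a set Y,
  realized as functions on Y (Aronszajn's construction): elements of the span of
  the K(.,y), y in Y, are encoded by finitely supported coefficient functions c
  (support inside Y); H(K) consists of the pointwise limits on Y of sequences of
  span elements that are Cauchy for the norm induced by K(x,y) = <K(.,x),K(.,y)>.\<close>

definition ksupp :: "('y \<Rightarrow> real) \<Rightarrow> 'y set" where
  "ksupp c = {y. c y \<noteq> 0}"

definition kcoeffs :: "'y set \<Rightarrow> ('y \<Rightarrow> real) set" where
  "kcoeffs Y = {c. finite (ksupp c) \<and> ksupp c \<subseteq> Y}"

definition kspan_fun :: "('y \<Rightarrow> 'y \<Rightarrow> real) \<Rightarrow> ('y \<Rightarrow> real) \<Rightarrow> 'y \<Rightarrow> real" where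
  "kspan_fun K c = (\<lambda>x. \<Sum>y\<in>ksupp c. c y * K x y)"

definition kspan_norm2 :: "('y \<Rightarrow> 'y \<Rightarrow> real) \<Rightarrow> ('y \<Rightarrow> real) \<Rightarrow> real" where
  "kspan_norm2 K c = (\<Sum>y\<in>ksupp c. \<Sum>z\<in>ksupp c. c y * c z * K y z)"

definition rkhs_approx ::
  "('y \<Rightarrow> 'y \<Rightarrow> real) \<Rightarrow> 'y set \<Rightarrow> (nat \<Rightarrow> 'y \<Rightarrow> real) \<Rightarrow> ('y \<Rightarrow> real) \<Rightarrow> bool" where
  "rkhs_approx K Y cs f \<longleftrightarrow>
     (\<forall>n. cs n \<in> kcoeffs Y) \<and>
     (\<forall>e>0. \<exists>N. \<forall>m\<ge>N. \<forall>n\<ge>N. sqrt (kspan_norm2 K (\<lambda>y. cs m y - cs n y)) < e) \<and>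
     (\<forall>x\<in>Y. (\<lambda>n. kspan_fun K (cs n) x) \<longlonglongrightarrow> f x)"

definition in_RKHS :: "('y \<Rightarrow> 'y \<Rightarrow> real) \<Rightarrow> 'y set \<Rightarrow> ('y \<Rightarrow> real) \<Rightarrow> bool" where
  "in_RKHS K Y f \<longleftrightarrow> (\<exists>cs. rkhs_approx K Y cs f)"

definition rkhs_norm :: "('y \<Rightarrow> 'y \<Rightarrow> real) \<Rightarrow> 'y set \<Rightarrow> ('y \<Rightarrow> real) \<Rightarrow> real" where
  "rkhs_norm K Y f = (THE r. \<forall>cs. rkhs_approx K Y cs f \<longrightarrow>
                               (\<lambda>n. sqrt (kspan_norm2 K (cs n))) \<longlonglongrightarrow> r)"

definition Ffin :: "'a measure \<Rightarrow> 'a set set" where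
  "Ffin M = {A \<in> sets M. 0 < emeasure M A \<and> emeasure M A < \<infinity>}"

definition Kmu :: "'a measure \<Rightarrow> 'a set \<Rightarrow> 'a set \<Rightarrow> real" where
  "Kmu M A B = measure M (A \<inter> B)"

definition L2 :: "'a measure \<Rightarrow> ('a \<Rightarrow> real) set" where
  "L2 M = {f. f \<in> borel_measurable M \<and> integrable M (\<lambda>x. (f x)\<^sup>2)}"

definition L2_norm_of :: "'a measure \<Rightarrow> ('a \<Rightarrow> real) \<Rightarrow> real" where
  "L2_norm_of M f = sqrt (\<integral>x. (f x)\<^sup>2 \<partial>M)"

end

theory Submission
  imports Defs
begin


lemma L2_meas[measurable_dest]: "f \<in> L2 M \<Longrightarrow> f \<in> borel_measurable M"
  by (simp add: L2_def)

lemma L2_int: "f \<in> L2 M \<Longrightarrow> integrable M (\<lambda>x. (f x)\<^sup>2)"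
  by (simp add: L2_def)

lemma L2_mult_int:
  assumes "f \<in> L2 M" "g \<in> L2 M"
  shows "integrable M (\<lambda>x. f x * g x)"
proof (rule Bochner_Integration.integrable_bound)
  show "integrable M (\<lambda>x. (f x)\<^sup>2 + (g x)\<^sup>2)" using assms by (simp add: L2_def)
  have [measurable]: "f \<in> borel_measurable M" "g \<in> borel_measurable M" using assms by (simp_all add: L2_def)
  show "(\<lambda>x. f x * g x) \<in> borel_measurable M" by measurable
  have "\<bar>f x * g x\<bar> \<le> (f x)\<^sup>2 + (g x)\<^sup>2" for x
  proof -
    have "2 * \<bar>f x\<bar> * \<bar>g x\<bar> \<le> \<bar>f x\<bar>\<^sup>2 + \<bar>g x\<bar>\<^sup>2" by (rule sum_squares_bound)
    moreover have "\<bar>f x * g x\<bar> = \<bar>f x\<bar> * \<bar>g x\<bar>" by (simp add: abs_mult)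
    moreover have "0 \<le> \<bar>f x\<bar> * \<bar>g x\<bar>" by simp
    ultimately show ?thesis by simp
  qed
  then show "AE x in M. norm (f x * g x) \<le> norm ((f x)\<^sup>2 + (g x)\<^sup>2)" by auto
qed

lemma L2_add: assumes "f \<in> L2 M" "g \<in> L2 M" shows "(\<lambda>x. f x + g x) \<in> L2 M"
proof -
  have "integrable M (\<lambda>x. (f x)\<^sup>2 + (g x)\<^sup>2 + 2 * (f x * g x))"
    using assms L2_mult_int[OF assms] by (simp add: L2_def)
  moreover have "(f x + g x)\<^sup>2 = (f x)\<^sup>2 + (g x)\<^sup>2 + 2 * (f x * g x)" for x
    by (simp add: power2_eq_square algebra_simps)
  moreover have [measurable]: "f \<in> borel_measurable M" "g \<in> borel_measurable M" using assms by (simp_all add: L2_def)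
  ultimately show ?thesis by (simp add: L2_def)
qed

lemma L2_scale: assumes "f \<in> L2 M" shows "(\<lambda>x. c * f x) \<in> L2 M"
proof -
  have "(c * f x)\<^sup>2 = c\<^sup>2 * (f x)\<^sup>2" for x by (simp add: power_mult_distrib)
  moreover have [measurable]: "f \<in> borel_measurable M" using assms by (simp_all add: L2_def)
  ultimately show ?thesis using assms by (simp add: L2_def)
qed

lemma L2_uminus: assumes "f \<in> L2 M" shows "(\<lambda>x. - f x) \<in> L2 M"
  using L2_scale[OF assms, of "-1"] by simp

lemma L2_diff: assumes "f \<in> L2 M" "g \<in> L2 M" shows "(\<lambda>x. f x - g x) \<in> L2 M"
  using L2_add[OF assms(1) L2_uminus[OF assms(2)]] by simp

lemma L2_zero: "(\<lambda>x. 0) \<in> L2 M" by (simp add: L2_def)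

lemma L2_sum: assumes "\<And>i. i \<in> S \<Longrightarrow> f i \<in> L2 M" shows "(\<lambda>x. \<Sum>i\<in>S. f i x) \<in> L2 M"
  using assms
proof (induction S rule: infinite_finite_induct)
  case (infinite A) then show ?case by (simp add: L2_zero)
next
  case empty then show ?case by (simp add: L2_zero)
next
  case (insert x F) then show ?case by (simp add: L2_add)
qed

lemma L2_indicator: assumes "A \<in> sets M" "emeasure M A < \<infinity>" shows "indicator A \<in> L2 M"
proof -
  have "(\<lambda>x. (indicator A x :: real)\<^sup>2) = indicator A" by (auto simp: indicator_def)
  moreover have "integrable M (indicator A :: _ \<Rightarrow> real)"
    using assms by (simp add: integrable_indicator_iff sets.Int_space_eq2)
  ultimately show ?thesis using assms by (simp add: L2_def)
qed

lemma quad_disc: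
  fixes A B C :: real
  assumes "\<And>t. 0 \<le> A + 2 * t * B + t\<^sup>2 * C"
  shows "B\<^sup>2 \<le> A * C"
proof (cases "C = 0")
  case True
  have "B = 0"
  proof (rule ccontr)
    assume "B \<noteq> 0"
    have "0 \<le> A + 2 * (- (A + 1) / (2 * B)) * B" using assms[of "- (A + 1) / (2 * B)"] True by simp
    also have "\<dots> = -1" using \<open>B \<noteq> 0\<close> by (simp add: field_simps)
    finally show False by simp
  qed
  then show ?thesis using True assms[of 0] by simp
next
  case False
  have C: "C \<ge> 0"
  proof (rule ccontr)
    assume "\<not> C \<ge> 0"
    then have "C < 0" by simp
    define s where "s = sqrt ((\<bar>A\<bar> + 1) / (- C))"
    have "(\<bar>A\<bar> + 1) / (- C) \<ge> 0" using \<open>C < 0\<close> by (intro divide_nonneg_pos) auto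
    then have s2: "s\<^sup>2 = (\<bar>A\<bar> + 1) / (- C)" unfolding s_def by simp
    have "0 \<le> (A + 2 * s * B + s\<^sup>2 * C) + (A + 2 * (-s) * B + (-s)\<^sup>2 * C)"
      using assms[of s] assms[of "-s"] by linarith
    also have "\<dots> = 2 * A + 2 * (s\<^sup>2 * C)" by (simp add: algebra_simps)
    also have "s\<^sup>2 * C = - (\<bar>A\<bar> + 1)" using s2 \<open>C < 0\<close> by (simp add: field_simps)
    finally show False by simp
  qed
  with False have "C > 0" by simp
  have "0 \<le> A + 2 * (- B / C) * B + (- B / C)\<^sup>2 * C" by (rule assms)
  also have "\<dots> = A - B\<^sup>2 / C" using \<open>C > 0\<close> by (simp add: field_simps power2_eq_square)
  finally show ?thesis using \<open>C > 0\<close> by (simp add: field_simps)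
qed

lemma L2_CS:
  assumes f: "f \<in> L2 M" and g: "g \<in> L2 M"
  shows "(\<integral>x. f x * g x \<partial>M)\<^sup>2 \<le> (\<integral>x. (f x)\<^sup>2 \<partial>M) * (\<integral>x. (g x)\<^sup>2 \<partial>M)"
proof (rule quad_disc)
  fix t :: real
  have i1: "integrable M (\<lambda>x. (f x)\<^sup>2)" "integrable M (\<lambda>x. (g x)\<^sup>2)" using f g by (simp_all add: L2_def)
  have i2: "integrable M (\<lambda>x. f x * g x)" using L2_mult_int[OF f g] .
  have "0 \<le> (\<integral>x. (f x + t * g x)\<^sup>2 \<partial>M)" by simp
  also have "(\<integral>x. (f x + t * g x)\<^sup>2 \<partial>M) = (\<integral>x. (f x)\<^sup>2 + (2 * t * (f x * g x) + t\<^sup>2 * (g x)\<^sup>2) \<partial>M)"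
    by (rule Bochner_Integration.integral_cong) (simp_all add: power2_eq_square algebra_simps)
  also have "\<dots> = (\<integral>x. (f x)\<^sup>2 \<partial>M) + 2 * t * (\<integral>x. f x * g x \<partial>M) + t\<^sup>2 * (\<integral>x. (g x)\<^sup>2 \<partial>M)"
    using i1 i2 by simp
  finally show "0 \<le> (\<integral>x. (f x)\<^sup>2 \<partial>M) + 2 * t * (\<integral>x. f x * g x \<partial>M) + t\<^sup>2 * (\<integral>x. (g x)\<^sup>2 \<partial>M)" .
qed



definition G :: "'a set set \<Rightarrow> ('a set \<Rightarrow> real) \<Rightarrow> 'a \<Rightarrow> real" where
  "G S c x = (\<Sum>A\<in>S. c A * indicator A x)"

lemma Ffin_sets: "A \<in> Ffin M \<Longrightarrow> A \<in> sets M" by (simp add: Ffin_def)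
lemma Ffin_fin: "A \<in> Ffin M \<Longrightarrow> emeasure M A < \<infinity>" by (simp add: Ffin_def)

lemma outside_ksupp: "y \<notin> ksupp c \<Longrightarrow> c y = 0" by (simp add: ksupp_def)
lemma outside_ksupp2: "ksupp c \<subseteq> S \<Longrightarrow> y \<notin> S \<Longrightarrow> c y = 0" by (auto simp: ksupp_def)

lemma kn2_ext:
  assumes "finite S" "ksupp c \<subseteq> S"
  shows "kspan_norm2 K c = (\<Sum>y\<in>S. \<Sum>z\<in>S. c y * c z * K y z)"
proof -
  have "kspan_norm2 K c = (\<Sum>y\<in>ksupp c. \<Sum>z\<in>S. c y * c z * K y z)"
    unfolding kspan_norm2_def
    by (intro sum.cong refl sum.mono_neutral_left assms) (auto simp: outside_ksupp)
  also have "\<dots> = (\<Sum>y\<in>S. \<Sum>z\<in>S. c y * c z * K y z)"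
    by (intro sum.mono_neutral_left assms) (auto simp: outside_ksupp)
  finally show ?thesis .
qed

lemma kfun_ext:
  assumes "finite S" "ksupp c \<subseteq> S"
  shows "kspan_fun K c x = (\<Sum>y\<in>S. c y * K x y)"
  unfolding kspan_fun_def
  by (intro sum.mono_neutral_left assms) (auto simp: outside_ksupp)

lemma G_ext:
  assumes "finite T" "ksupp c \<subseteq> S" "S \<subseteq> T"
  shows "G S c x = G T c x"
  unfolding G_def
  by (intro sum.mono_neutral_left assms) (use assms in \<open>auto simp: outside_ksupp2\<close>)

lemma G_diff: "G S (\<lambda>y. c y - d y) x = G S c x - G S d x"
  unfolding G_def by (simp add: sum_subtractf left_diff_distrib)

lemma G_L2:
  assumes "S \<subseteq> Ffin M"
  shows "G S c \<in> L2 M"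
proof -
  have "(\<lambda>x. \<Sum>A\<in>S. c A * indicator A x) \<in> L2 M"
    by (intro L2_sum L2_scale L2_indicator) (use assms in \<open>auto simp: Ffin_def\<close>)
  then show ?thesis unfolding G_def[abs_def] .
qed

lemma ind_int:
  assumes "A \<in> Ffin M" "B \<in> sets M"
  shows "integrable M (\<lambda>x. indicator A x * indicator B x :: real)"
    and "(\<integral>x. indicator A x * indicator B x \<partial>M) = measure M (A \<inter> B)"
proof -
  have e: "(\<lambda>x. indicator A x * indicator B x :: real) = indicator (A \<inter> B)"
    by (auto simp: indicator_def)
  have s: "A \<inter> B \<in> sets M" using assms by (auto simp: Ffin_def)
  have "emeasure M (A \<inter> B) \<le> emeasure M A" using assms by (intro emeasure_mono) (auto simp: Ffin_def)
  then have f: "emeasure M (A \<inter> B) < \<infinity>" using assms by (auto simp: Ffin_def)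
  show "integrable M (\<lambda>x. indicator A x * indicator B x :: real)"
    unfolding e using s f by (simp add: integrable_indicator_iff sets.Int_space_eq2)
  show "(\<integral>x. indicator A x * indicator B x \<partial>M) = measure M (A \<inter> B)"
    unfolding e using s by (simp add: sets.Int_space_eq2)
qed

lemma G_sq_int:
  assumes "finite S" "S \<subseteq> Ffin M"
  shows "(\<integral>x. (G S c x)\<^sup>2 \<partial>M) = (\<Sum>y\<in>S. \<Sum>z\<in>S. c y * c z * Kmu M y z)"
proof -
  have mem: "y \<in> Ffin M" "y \<in> sets M" if "y \<in> S" for y using that assms by (auto simp: Ffin_def)
  have int: "integrable M (\<lambda>x. c y * c z * (indicator y x * indicator z x :: real))" if "y \<in> S" "z \<in> S" for y z
    using ind_int(1)[OF mem(1)[OF that(1)] mem(2)[OF that(2)]] by simp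
  have "(\<integral>x. (G S c x)\<^sup>2 \<partial>M) = (\<integral>x. (\<Sum>y\<in>S. \<Sum>z\<in>S. c y * c z * (indicator y x * indicator z x)) \<partial>M)"
    unfolding G_def power2_eq_square sum_product by (intro Bochner_Integration.integral_cong refl sum.cong) (simp add: indicator_def)
  also have "\<dots> = (\<Sum>y\<in>S. \<integral>x. (\<Sum>z\<in>S. c y * c z * (indicator y x * indicator z x)) \<partial>M)"
    by (rule Bochner_Integration.integral_sum) (intro Bochner_Integration.integrable_sum int)
  also have "\<dots> = (\<Sum>y\<in>S. \<Sum>z\<in>S. \<integral>x. c y * c z * (indicator y x * indicator z x) \<partial>M)"
    by (intro sum.cong refl Bochner_Integration.integral_sum int)
  also have "\<dots> = (\<Sum>y\<in>S. \<Sum>z\<in>S. c y * c z * Kmu M y z)"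
  proof (intro sum.cong refl)
    fix y z assume "y \<in> S" "z \<in> S"
    then show "(\<integral>x. c y * c z * (indicator y x * indicator z x) \<partial>M) = c y * c z * Kmu M y z"
      using ind_int(2)[OF mem(1)[of y] mem(2)[of z]] by (simp add: Kmu_def)
  qed
  finally show ?thesis .
qed

lemma G_set_int:
  assumes "finite S" "S \<subseteq> Ffin M" "B \<in> Ffin M"
  shows "(LINT x:B|M. G S c x) = (\<Sum>y\<in>S. c y * Kmu M B y)"
proof -
  have mem: "y \<in> sets M" if "y \<in> S" for y using that assms by (auto simp: Ffin_def)
  have int: "integrable M (\<lambda>x. c y * (indicator B x * indicator y x :: real))" if "y \<in> S" for y
    using ind_int(1)[OF assms(3) mem[OF that]] by simp
  have "(LINT x:B|M. G S c x) = (\<integral>x. (\<Sum>y\<in>S. c y * (indicator B x * indicator y x)) \<partial>M)"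
    unfolding set_lebesgue_integral_def G_def sum_distrib_left by (intro Bochner_Integration.integral_cong refl sum.cong) (simp add: indicator_def)
  also have "\<dots> = (\<Sum>y\<in>S. \<integral>x. c y * (indicator B x * indicator y x) \<partial>M)"
    by (rule Bochner_Integration.integral_sum) (rule int)
  also have "\<dots> = (\<Sum>y\<in>S. c y * Kmu M B y)"
  proof (intro sum.cong refl)
    fix y assume "y \<in> S"
    then show "(\<integral>x. c y * (indicator B x * indicator y x) \<partial>M) = c y * Kmu M B y"
      using ind_int(2)[OF assms(3) mem[of y]] by (simp add: Kmu_def)
  qed
  finally show ?thesis .
qed



lemma sq_to_zero:
  fixes a :: "nat \<Rightarrow> real"
  assumes "(\<lambda>n. (a n)\<^sup>2) \<longlonglongrightarrow> 0"
  shows "a \<longlonglongrightarrow> 0"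
proof -
  have "(\<lambda>n. sqrt ((a n)\<^sup>2)) \<longlonglongrightarrow> sqrt 0" by (intro tendsto_real_sqrt assms)
  then have "(\<lambda>n. \<bar>a n\<bar>) \<longlonglongrightarrow> 0" by simp
  then show ?thesis by (simp add: tendsto_rabs_zero_iff)
qed

lemma L2_sq_tri:
  assumes f: "f \<in> L2 M" and g: "g \<in> L2 M"
  shows "(\<integral>x. (f x + g x)\<^sup>2 \<partial>M) \<le> 2 * (\<integral>x. (f x)\<^sup>2 \<partial>M) + 2 * (\<integral>x. (g x)\<^sup>2 \<partial>M)"
proof -
  have "(\<integral>x. (f x + g x)\<^sup>2 \<partial>M) \<le> (\<integral>x. 2 * (f x)\<^sup>2 + 2 * (g x)\<^sup>2 \<partial>M)"
  proof (rule integral_mono)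
    show "integrable M (\<lambda>x. (f x + g x)\<^sup>2)" using L2_add[OF f g] by (simp add: L2_def)
    show "integrable M (\<lambda>x. 2 * (f x)\<^sup>2 + 2 * (g x)\<^sup>2)" using f g by (simp add: L2_def)
    fix x
    have "0 \<le> (f x - g x)\<^sup>2" by simp
    then show "(f x + g x)\<^sup>2 \<le> 2 * (f x)\<^sup>2 + 2 * (g x)\<^sup>2"
      by (simp add: power2_eq_square algebra_simps)
  qed
  also have "\<dots> = 2 * (\<integral>x. (f x)\<^sup>2 \<partial>M) + 2 * (\<integral>x. (g x)\<^sup>2 \<partial>M)"
    using f g by (simp add: L2_def)
  finally show ?thesis .
qed

lemma L2_sq_tri':
  assumes f: "f \<in> L2 M" and g: "g \<in> L2 M" and h: "h \<in> L2 M"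
  shows "(\<integral>x. (f x - h x)\<^sup>2 \<partial>M) \<le> 2 * (\<integral>x. (f x - g x)\<^sup>2 \<partial>M) + 2 * (\<integral>x. (g x - h x)\<^sup>2 \<partial>M)"
  using L2_sq_tri[OF L2_diff[OF f g] L2_diff[OF g h]] by simp

lemma L2_conv_set:
  assumes h: "h \<in> L2 M" and g: "\<And>n. g n \<in> L2 M"
    and d: "(\<lambda>n. \<integral>x. (g n x - h x)\<^sup>2 \<partial>M) \<longlonglongrightarrow> 0"
    and B: "B \<in> sets M" "emeasure M B < \<infinity>"
  shows "(\<lambda>n. LINT x:B|M. g n x) \<longlonglongrightarrow> (LINT x:B|M. h x)"
proof -
  have iB: "indicator B \<in> L2 M" using L2_indicator[OF B] .
  have eq: "(LINT x:B|M. g n x) - (LINT x:B|M. h x) = (\<integral>x. (g n x - h x) * indicator B x \<partial>M)" for n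
  proof -
    have "(LINT x:B|M. g n x) - (LINT x:B|M. h x) = (\<integral>x. g n x * indicator B x - h x * indicator B x \<partial>M)"
      unfolding set_lebesgue_integral_def using L2_mult_int[OF g iB] L2_mult_int[OF h iB]
      by (simp add: mult.commute)
    then show ?thesis by (simp add: left_diff_distrib)
  qed
  have bd: "((LINT x:B|M. g n x) - (LINT x:B|M. h x))\<^sup>2 \<le> (\<integral>x. (g n x - h x)\<^sup>2 \<partial>M) * measure M B" for n
  proof -
    have "(\<integral>x. (indicator B x :: real)\<^sup>2 \<partial>M) = measure M B"
    proof -
      have "(\<lambda>x. (indicator B x :: real)\<^sup>2) = indicator B" by (auto simp: indicator_def)
      then show ?thesis using B by (simp add: sets.Int_space_eq2)
    qed
    then show ?thesis unfolding eq using L2_CS[OF L2_diff[OF g h] iB] by simp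
  qed
  have "(\<lambda>n. ((LINT x:B|M. g n x) - (LINT x:B|M. h x))\<^sup>2) \<longlonglongrightarrow> 0"
  proof (rule tendsto_sandwich[of "\<lambda>_. 0" _ _ "\<lambda>n. (\<integral>x. (g n x - h x)\<^sup>2 \<partial>M) * measure M B"])
    show "\<forall>\<^sub>F n in sequentially. 0 \<le> ((LINT x:B|M. g n x) - (LINT x:B|M. h x))\<^sup>2" by simp
    show "\<forall>\<^sub>F n in sequentially. ((LINT x:B|M. g n x) - (LINT x:B|M. h x))\<^sup>2 \<le> (\<integral>x. (g n x - h x)\<^sup>2 \<partial>M) * measure M B"
      using bd by simp
    show "(\<lambda>n. 0) \<longlonglongrightarrow> (0::real)" by simp
    show "(\<lambda>n. (\<integral>x. (g n x - h x)\<^sup>2 \<partial>M) * measure M B) \<longlonglongrightarrow> 0"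
      using tendsto_mult[OF d tendsto_const[of "measure M B"]] by simp
  qed
  then have "(\<lambda>n. (LINT x:B|M. g n x) - (LINT x:B|M. h x)) \<longlonglongrightarrow> 0" by (rule sq_to_zero)
  then show ?thesis by (simp add: LIM_zero_iff)
qed

lemma L2_conv_norm:
  assumes h: "h \<in> L2 M" and g: "\<And>n. g n \<in> L2 M"
    and d: "(\<lambda>n. \<integral>x. (g n x - h x)\<^sup>2 \<partial>M) \<longlonglongrightarrow> 0"
  shows "(\<lambda>n. \<integral>x. (g n x)\<^sup>2 \<partial>M) \<longlonglongrightarrow> (\<integral>x. (h x)\<^sup>2 \<partial>M)"
proof -
  define e where "e n = (\<integral>x. (g n x - h x) * h x \<partial>M)" for n
  have eq: "(\<integral>x. (g n x)\<^sup>2 \<partial>M) = (\<integral>x. (g n x - h x)\<^sup>2 \<partial>M) + 2 * e n + (\<integral>x. (h x)\<^sup>2 \<partial>M)" for n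
  proof -
    have "(\<integral>x. (g n x)\<^sup>2 \<partial>M) = (\<integral>x. (g n x - h x)\<^sup>2 + 2 * ((g n x - h x) * h x) + (h x)\<^sup>2 \<partial>M)"
      by (rule Bochner_Integration.integral_cong) (simp_all add: power2_eq_square algebra_simps)
    also have "\<dots> = (\<integral>x. (g n x - h x)\<^sup>2 \<partial>M) + 2 * e n + (\<integral>x. (h x)\<^sup>2 \<partial>M)"
      unfolding e_def using L2_diff[OF g h] h L2_mult_int[OF L2_diff[OF g h] h]
      by (simp add: L2_def)
    finally show ?thesis .
  qed
  have "(\<lambda>n. (e n)\<^sup>2) \<longlonglongrightarrow> 0"
  proof (rule tendsto_sandwich[of "\<lambda>_. 0" _ _ "\<lambda>n. (\<integral>x. (g n x - h x)\<^sup>2 \<partial>M) * (\<integral>x. (h x)\<^sup>2 \<partial>M)"])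
    show "\<forall>\<^sub>F n in sequentially. 0 \<le> (e n)\<^sup>2" by simp
    show "\<forall>\<^sub>F n in sequentially. (e n)\<^sup>2 \<le> (\<integral>x. (g n x - h x)\<^sup>2 \<partial>M) * (\<integral>x. (h x)\<^sup>2 \<partial>M)"
      unfolding e_def using L2_CS[OF L2_diff[OF g h] h] by simp
    show "(\<lambda>n. 0) \<longlonglongrightarrow> (0::real)" by simp
    show "(\<lambda>n. (\<integral>x. (g n x - h x)\<^sup>2 \<partial>M) * (\<integral>x. (h x)\<^sup>2 \<partial>M)) \<longlonglongrightarrow> 0"
      using tendsto_mult[OF d tendsto_const[of "\<integral>x. (h x)\<^sup>2 \<partial>M"]] by simp
  qed
  then have "e \<longlonglongrightarrow> 0" by (rule sq_to_zero)
  then have "(\<lambda>n. (\<integral>x. (g n x - h x)\<^sup>2 \<partial>M) + 2 * e n + (\<integral>x. (h x)\<^sup>2 \<partial>M)) \<longlonglongrightarrow> 0 + 2 * 0 + (\<integral>x. (h x)\<^sup>2 \<partial>M)"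
    by (intro tendsto_intros d)
  then show ?thesis unfolding eq by simp
qed

lemma L2_level_null:
  assumes h: "h \<in> L2 M" and z: "\<And>B. B \<in> Ffin M \<Longrightarrow> (LINT x:B|M. h x) = 0"
    and e: "e > 0"
  shows "emeasure M {x\<in>space M. e \<le> h x} = 0"
proof -
  define P where "P = {x\<in>space M. e \<le> h x}"
  have [measurable]: "h \<in> borel_measurable M" using h by (simp add: L2_def)
  have Ps: "P \<in> sets M" unfolding P_def by measurable
  have "integrable M (indicator P :: _ \<Rightarrow> real)"
  proof (rule Bochner_Integration.integrable_bound)
    show "integrable M (\<lambda>x. (h x)\<^sup>2 / e\<^sup>2)" using h by (simp add: L2_def)
    show "indicator P \<in> borel_measurable M" using Ps by simp
    have "indicator P x \<le> (h x)\<^sup>2 / e\<^sup>2" for x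
    proof (cases "x \<in> P")
      case True
      then have "e \<le> h x" by (simp add: P_def)
      then have "e\<^sup>2 \<le> (h x)\<^sup>2" using e by (intro power_mono) auto
      then show ?thesis using True e by simp
    qed simp
    then show "AE x in M. norm (indicator P x :: real) \<le> norm ((h x)\<^sup>2 / e\<^sup>2)" by simp
  qed
  then have Pf: "emeasure M P < \<infinity>" using Ps by (simp add: integrable_indicator_iff sets.Int_space_eq2)
  show ?thesis
  proof (rule ccontr)
    assume "emeasure M {x\<in>space M. e \<le> h x} \<noteq> 0"
    then have "emeasure M P > 0" unfolding P_def by (simp add: zero_less_iff_neq_zero)
    then have PF: "P \<in> Ffin M" using Ps Pf by (simp add: Ffin_def)
    have mP: "measure M P > 0" using \<open>emeasure M P > 0\<close> Pf
      by (simp add: emeasure_eq_ennreal_measure)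
    have "(\<integral>x. e * indicator P x \<partial>M) \<le> (\<integral>x. indicator P x * h x \<partial>M)"
    proof (rule integral_mono)
      show "integrable M (\<lambda>x. e * indicator P x)" using \<open>integrable M (indicator P)\<close> by simp
      show "integrable M (\<lambda>x. indicator P x * h x)" using L2_mult_int[OF L2_indicator[OF Ps Pf] h] .
      fix x show "e * indicator P x \<le> indicator P x * h x" by (auto simp: P_def indicator_def)
    qed
    also have "\<dots> = 0" using z[OF PF] by (simp add: set_lebesgue_integral_def)
    finally have "e * measure M P \<le> 0" using Ps by (simp add: sets.Int_space_eq2)
    then show False using e mP by (simp add: mult_le_0_iff)
  qed
qed

lemma L2_AE_le0:
  assumes h: "h \<in> L2 M" and z: "\<And>B. B \<in> Ffin M \<Longrightarrow> (LINT x:B|M. h x) = 0"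
  shows "AE x in M. h x \<le> 0"
proof (rule AE_upper_bound_inf[where G="\<lambda>_. 0", simplified])
  fix e :: real assume e: "e > 0"
  have [measurable]: "h \<in> borel_measurable M" using h by (simp add: L2_def)
  have "{x\<in>space M. e \<le> h x} \<in> null_sets M"
    using L2_level_null[OF h z e] by (auto simp: null_sets_def)
  then have "AE x in M. x \<notin> {x\<in>space M. e \<le> h x}" by (rule AE_not_in)
  from this AE_space show "AE x in M. h x \<le> e" by eventually_elim auto
qed

lemma L2_unique:
  assumes h: "h \<in> L2 M" and z: "\<And>B. B \<in> Ffin M \<Longrightarrow> (LINT x:B|M. h x) = 0"
  shows "(\<integral>x. (h x)\<^sup>2 \<partial>M) = 0"
proof -
  have "AE x in M. h x \<le> 0" by (rule L2_AE_le0[OF h z])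
  moreover have "AE x in M. - h x \<le> 0"
  proof (rule L2_AE_le0[OF L2_uminus[OF h]])
    fix B assume "B \<in> Ffin M"
    then show "(LINT x:B|M. - h x) = 0" using z[of B] by (simp add: set_lebesgue_integral_def)
  qed
  ultimately have "AE x in M. (h x)\<^sup>2 = 0" by eventually_elim auto
  then have "(\<integral>x. (h x)\<^sup>2 \<partial>M) = (\<integral>x. 0 \<partial>M)" by (intro integral_cong_AE) (use h in \<open>auto simp: L2_def\<close>)
  then show ?thesis by simp
qed



lemma L2_markov:
  assumes f: "f \<in> L2 M" and e: "e > 0"
  defines "P \<equiv> {x\<in>space M. e \<le> \<bar>f x\<bar>}"
  shows "P \<in> sets M" "emeasure M P < \<infinity>" "measure M P \<le> (\<integral>x. (f x)\<^sup>2 \<partial>M) / e\<^sup>2"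
proof -
  have [measurable]: "f \<in> borel_measurable M" using f by (simp add: L2_def)
  show Ps: "P \<in> sets M" unfolding P_def by measurable
  have bd: "indicator P x \<le> (f x)\<^sup>2 / e\<^sup>2" for x
  proof (cases "x \<in> P")
    case True
    then have "e \<le> \<bar>f x\<bar>" by (simp add: P_def)
    then have "e\<^sup>2 \<le> \<bar>f x\<bar>\<^sup>2" using e by (intro power_mono) auto
    then show ?thesis using True e by simp
  qed simp
  have ii: "integrable M (\<lambda>x. (f x)\<^sup>2 / e\<^sup>2)" using f by (simp add: L2_def)
  have iP: "integrable M (indicator P :: _ \<Rightarrow> real)"
  proof (rule Bochner_Integration.integrable_bound[OF ii])
    show "indicator P \<in> borel_measurable M" using Ps by simp
    show "AE x in M. norm (indicator P x :: real) \<le> norm ((f x)\<^sup>2 / e\<^sup>2)" using bd by simp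
  qed
  then show "emeasure M P < \<infinity>" using Ps by (simp add: integrable_indicator_iff sets.Int_space_eq2)
  have "measure M P = (\<integral>x. indicator P x \<partial>M)" using Ps by (simp add: sets.Int_space_eq2)
  also have "\<dots> \<le> (\<integral>x. (f x)\<^sup>2 / e\<^sup>2 \<partial>M)" by (intro integral_mono iP ii bd)
  also have "\<dots> = (\<integral>x. (f x)\<^sup>2 \<partial>M) / e\<^sup>2" by simp
  finally show "measure M P \<le> (\<integral>x. (f x)\<^sup>2 \<partial>M) / e\<^sup>2" .
qed

lemma L2_complete:
  assumes g: "\<And>n. g n \<in> L2 M"
    and C: "\<And>e. e > 0 \<Longrightarrow> \<exists>N. \<forall>m\<ge>N. \<forall>n\<ge>N. (\<integral>x. (g m x - g n x)\<^sup>2 \<partial>M) < e"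
  shows "\<exists>h\<in>L2 M. (\<lambda>n. \<integral>x. (g n x - h x)\<^sup>2 \<partial>M) \<longlonglongrightarrow> 0"
proof -
  have gm[measurable]: "g n \<in> borel_measurable M" for n using g by (simp add: L2_def)
  have "\<forall>k. \<exists>N. \<forall>m\<ge>N. \<forall>n\<ge>N. (\<integral>x. (g m x - g n x)\<^sup>2 \<partial>M) < (1/8::real)^k"
    using C by simp
  then obtain N where N: "\<And>k m n. m \<ge> N k \<Longrightarrow> n \<ge> N k \<Longrightarrow> (\<integral>x. (g m x - g n x)\<^sup>2 \<partial>M) < (1/8::real)^k"
    by metis
  define r where "r k = (\<Sum>i\<le>k. N i) + k" for k
  have rN: "N k \<le> r k" for k
  proof -
    have "N k \<le> (\<Sum>i\<le>k. N i)" by (rule member_le_sum) auto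
    then show ?thesis by (simp add: r_def)
  qed
  have rmono: "r k \<le> r j" if "k \<le> j" for k j
  proof -
    have "(\<Sum>i\<le>k. N i) \<le> (\<Sum>i\<le>j. N i)" by (rule sum_mono2) (use that in auto)
    then show ?thesis using that by (simp add: r_def)
  qed
  have rk: "k \<le> r k" for k by (simp add: r_def)
  have Nr: "(\<integral>x. (g m x - g n x)\<^sup>2 \<partial>M) < (1/8::real)^k" if "m \<ge> r k" "n \<ge> r k" for k m n
    using N[of k m n] rN[of k] that by simp
  define d where "d k x = g (r (Suc k)) x - g (r k) x" for k x
  have dL2: "d k \<in> L2 M" for k unfolding d_def by (intro L2_diff g)
  have dint: "(\<integral>x. (d k x)\<^sup>2 \<partial>M) < (1/8::real)^k" for k
    unfolding d_def using Nr[of k "r (Suc k)" "r k"] rmono[of k "Suc k"] by simp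
  define E where "E k = {x\<in>space M. (1/2::real)^k \<le> \<bar>d k x\<bar>}" for k
  have Es: "E k \<in> sets M" and Ef: "emeasure M (E k) < \<infinity>" for k
    using L2_markov[OF dL2[of k], of "(1/2)^k"] by (simp_all add: E_def)
  have Em: "measure M (E k) \<le> (1/2::real)^k" for k
  proof -
    have "measure M (E k) \<le> (\<integral>x. (d k x)\<^sup>2 \<partial>M) / ((1/2::real)^k)\<^sup>2"
      using L2_markov[OF dL2[of k], of "(1/2)^k"] by (simp add: E_def)
    also have "\<dots> \<le> (1/8::real)^k / ((1/2::real)^k)\<^sup>2"
      using dint[of k] by (intro divide_right_mono) auto
    also have "\<dots> = (1/2::real)^k"
    proof -
      have "(1/8::real) = (1/2)*((1/2)^2)" by (simp add: power2_eq_square)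
      then have "(1/8::real)^k = ((1/2)*((1/2)^2))^k" by (simp only:)
      also have "\<dots> = (1/2)^k * ((1/2)^2)^k" by (rule power_mult_distrib)
      also have "((1/2::real)^2)^k = ((1/2)^k)^2" by (simp add: power_mult[symmetric] mult.commute)
      finally have e8: "(1/8::real)^k = (1/2)^k * ((1/2)^k)^2" .
      have "((1/2::real)^k)^2 > 0" by simp
      then show ?thesis unfolding e8 by simp
    qed
    finally show ?thesis .
  qed
  have Esum: "summable (\<lambda>k. measure M (E k))"
    by (rule summable_comparison_test[where g="\<lambda>k. (1/2::real)^k"]) (use Em in \<open>auto simp: summable_geometric\<close>)
  have AEev: "AE x in M. eventually (\<lambda>k. x \<in> space M - E k) sequentially"
    by (rule borel_cantelli_AE1[OF Es Ef Esum])
  have conv: "convergent (\<lambda>k. g (r k) x)" if "x \<in> space M" "eventually (\<lambda>k. x \<in> space M - E k) sequentially" for x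
  proof -
    have "eventually (\<lambda>k. norm (d k x) \<le> (1/2::real)^k) sequentially"
      using that(2) by eventually_elim (auto simp: E_def that(1))
    then have "summable (\<lambda>k. d k x)"
      by (rule summable_comparison_test_ev) (simp add: summable_geometric)
    then have "(\<lambda>k. \<Sum>i<k. d i x) \<longlonglongrightarrow> (\<Sum>i. d i x)" by (rule summable_LIMSEQ)
    then have "(\<lambda>k. g (r 0) x + (\<Sum>i<k. d i x)) \<longlonglongrightarrow> g (r 0) x + (\<Sum>i. d i x)" by (intro tendsto_intros)
    moreover have "g (r 0) x + (\<Sum>i<k. d i x) = g (r k) x" for k
      unfolding d_def by (subst sum_lessThan_telescope[where f="\<lambda>i. g (r i) x"]) simp
    ultimately show ?thesis by (auto simp: convergent_def)
  qed
  define h where "h x = lim (\<lambda>k. g (r k) x)" for x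
  have hm[measurable]: "h \<in> borel_measurable M" unfolding h_def by measurable
  have hlim: "AE x in M. (\<lambda>k. g (r k) x) \<longlonglongrightarrow> h x"
    using AEev AE_space
  proof eventually_elim
    case (elim x)
    then have "convergent (\<lambda>k. g (r k) x)" using conv by blast
    then show ?case by (simp add: h_def convergent_LIMSEQ_iff)
  qed
  have tail: "integrable M (\<lambda>x. (h x - g (r k) x)\<^sup>2) \<and> (\<integral>x. (h x - g (r k) x)\<^sup>2 \<partial>M) \<le> (1/8::real)^k" for k
  proof -
    have "(\<integral>\<^sup>+x. ennreal ((h x - g (r k) x)\<^sup>2) \<partial>M) = (\<integral>\<^sup>+x. liminf (\<lambda>j. ennreal ((g (r j) x - g (r k) x)\<^sup>2)) \<partial>M)"
    proof (rule nn_integral_cong_AE)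
      show "AE x in M. ennreal ((h x - g (r k) x)\<^sup>2) = liminf (\<lambda>j. ennreal ((g (r j) x - g (r k) x)\<^sup>2))"
        using hlim
      proof eventually_elim
        case (elim x)
        then have "(\<lambda>j. (g (r j) x - g (r k) x)\<^sup>2) \<longlonglongrightarrow> (h x - g (r k) x)\<^sup>2"
          by (intro tendsto_intros)
        then have "(\<lambda>j. ennreal ((g (r j) x - g (r k) x)\<^sup>2)) \<longlonglongrightarrow> ennreal ((h x - g (r k) x)\<^sup>2)"
          by (rule tendsto_ennrealI)
        from lim_imp_Liminf[OF trivial_limit_sequentially this] show ?case by simp
      qed
    qed
    also have "\<dots> \<le> liminf (\<lambda>j. \<integral>\<^sup>+x. ennreal ((g (r j) x - g (r k) x)\<^sup>2) \<partial>M)"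
      by (rule nn_integral_liminf) measurable
    also have "\<dots> \<le> liminf (\<lambda>j. ennreal ((1/8::real)^k))"
    proof (rule Liminf_mono)
      show "\<forall>\<^sub>F j in sequentially. (\<integral>\<^sup>+x. ennreal ((g (r j) x - g (r k) x)\<^sup>2) \<partial>M) \<le> ennreal ((1/8::real)^k)"
        using eventually_ge_at_top[of k]
      proof eventually_elim
        case (elim j)
        have "(\<integral>\<^sup>+x. ennreal ((g (r j) x - g (r k) x)\<^sup>2) \<partial>M) = ennreal (\<integral>x. (g (r j) x - g (r k) x)\<^sup>2 \<partial>M)"
          using L2_diff[OF g g] by (intro nn_integral_eq_integral) (auto simp: L2_def)
        also have "\<dots> \<le> ennreal ((1/8::real)^k)"
          using Nr[of k "r j" "r k"] rmono[OF elim] by (intro ennreal_leI) simp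
        finally show ?case .
      qed
    qed
    also have "\<dots> = ennreal ((1/8::real)^k)" by (simp add: Liminf_const)
    finally have le: "(\<integral>\<^sup>+x. ennreal ((h x - g (r k) x)\<^sup>2) \<partial>M) \<le> ennreal ((1/8::real)^k)" .
    have int: "integrable M (\<lambda>x. (h x - g (r k) x)\<^sup>2)"
      unfolding integrable_iff_bounded using le by (auto simp: top.not_eq_extremum le_less_trans)
    have "ennreal (\<integral>x. (h x - g (r k) x)\<^sup>2 \<partial>M) = (\<integral>\<^sup>+x. ennreal ((h x - g (r k) x)\<^sup>2) \<partial>M)"
      using int by (intro nn_integral_eq_integral[symmetric]) auto
    with le have "ennreal (\<integral>x. (h x - g (r k) x)\<^sup>2 \<partial>M) \<le> ennreal ((1/8::real)^k)" by simp
    then have "(\<integral>x. (h x - g (r k) x)\<^sup>2 \<partial>M) \<le> (1/8::real)^k" by (simp add: ennreal_le_iff)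
    with int show ?thesis by simp
  qed
  have hk: "(\<lambda>x. h x - g (r k) x) \<in> L2 M" for k using tail[of k] by (simp add: L2_def)
  have hL2: "h \<in> L2 M" using L2_add[OF hk[of 0] g[of "r 0"]] by simp
  show ?thesis
  proof (intro bexI[OF _ hL2] LIMSEQ_I)
    fix e :: real assume e: "e > 0"
    have "(\<lambda>k. 4 * (1/8::real)^k) \<longlonglongrightarrow> 4 * 0" by (intro tendsto_intros LIMSEQ_realpow_zero) auto
    then obtain k where k: "4 * (1/8::real)^k < e" using e
      by (metis (no_types, lifting) LIMSEQ_le_const linorder_not_le mult_zero_right)
    show "\<exists>no. \<forall>n\<ge>no. norm ((\<integral>x. (g n x - h x)\<^sup>2 \<partial>M) - 0) < e"
    proof (intro exI allI impI)
      fix n assume n: "n \<ge> r k"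
      have "(\<integral>x. (g n x - h x)\<^sup>2 \<partial>M) \<le> 2 * (\<integral>x. (g n x - g (r k) x)\<^sup>2 \<partial>M) + 2 * (\<integral>x. (g (r k) x - h x)\<^sup>2 \<partial>M)"
        by (rule L2_sq_tri'[OF g g hL2])
      also have "(\<integral>x. (g (r k) x - h x)\<^sup>2 \<partial>M) = (\<integral>x. (h x - g (r k) x)\<^sup>2 \<partial>M)"
        by (simp add: power2_commute)
      also have "2 * (\<integral>x. (g n x - g (r k) x)\<^sup>2 \<partial>M) + 2 * (\<integral>x. (h x - g (r k) x)\<^sup>2 \<partial>M) < 4 * (1/8::real)^k"
        using Nr[of k n "r k"] n tail[of k] by simp
      finally show "norm ((\<integral>x. (g n x - h x)\<^sup>2 \<partial>M) - 0) < e" using k by simp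
    qed
  qed
qed



lemma L2_approx:
  assumes phi: "\<phi> \<in> L2 M"
  shows "\<exists>cs. (\<forall>n. cs n \<in> kcoeffs (Ffin M)) \<and>
    (\<lambda>n. \<integral>x. (G (ksupp (cs n)) (cs n) x - \<phi> x)\<^sup>2 \<partial>M) \<longlonglongrightarrow> 0"
proof -
  have pm[measurable]: "\<phi> \<in> borel_measurable M" using phi by (simp add: L2_def)
  obtain F where Fs: "\<And>i. simple_function M (F i)"
    and Fl: "\<And>x. x \<in> space M \<Longrightarrow> (\<lambda>i. F i x) \<longlonglongrightarrow> \<phi> x"
    and Fb: "\<And>i x. x \<in> space M \<Longrightarrow> dist (F i x) 0 \<le> 2 * dist (\<phi> x) 0"
    using borel_measurable_implies_sequence_metric[OF pm, of 0] by metis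
  have Fm[measurable]: "F i \<in> borel_measurable M" for i using Fs by (rule borel_measurable_simple_function)
  define A where "A i v = F i -` {v} \<inter> space M" for i v
  define W where "W i = {v \<in> F i ` space M. v \<noteq> 0 \<and> emeasure M (A i v) > 0}" for i
  define cs where "cs i B = (\<Sum>v\<in>W i. if A i v = B then v else 0)" for i B
  have As: "A i v \<in> sets M" for i v unfolding A_def using simple_functionD(2)[OF Fs] .
  have Wfin: "finite (W i)" for i
    using simple_functionD(1)[OF Fs[of i]] unfolding W_def by (rule rev_finite_subset) auto
  have Afin: "emeasure M (A i v) < \<infinity>" if "v \<noteq> 0" for i v
  proof -
    have "A i v \<subseteq> {x\<in>space M. \<bar>v\<bar>/2 \<le> \<bar>\<phi> x\<bar>}"
      using Fb[of _ i] by (force simp: A_def dist_real_def mult.commute)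
    then have "emeasure M (A i v) \<le> emeasure M {x\<in>space M. \<bar>v\<bar>/2 \<le> \<bar>\<phi> x\<bar>}"
      by (intro emeasure_mono) (use L2_markov[OF phi, of "\<bar>v\<bar>/2"] that in auto)
    also have "\<dots> < \<infinity>" using L2_markov[OF phi, of "\<bar>v\<bar>/2"] that by simp
    finally show ?thesis .
  qed
  have AW: "A i v \<in> Ffin M" if "v \<in> W i" for i v
    using that As Afin by (auto simp: W_def Ffin_def)
  define S where "S i = A i ` W i" for i
  have Sfin: "finite (S i)" for i using Wfin by (simp add: S_def)
  have SF: "S i \<subseteq> Ffin M" for i using AW by (auto simp: S_def)
  have supp: "ksupp (cs i) \<subseteq> S i" for i
  proof
    fix B assume "B \<in> ksupp (cs i)"
    then have "cs i B \<noteq> 0" by (simp add: ksupp_def)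
    have "\<exists>v\<in>W i. A i v = B"
    proof (rule ccontr)
      assume "\<not> (\<exists>v\<in>W i. A i v = B)"
      then have "cs i B = 0" unfolding cs_def by (intro sum.neutral) auto
      with \<open>cs i B \<noteq> 0\<close> show False by simp
    qed
    then obtain v where "v \<in> W i" "A i v = B" by blast
    then show "B \<in> S i" by (auto simp: S_def)
  qed
  have csk: "cs i \<in> kcoeffs (Ffin M)" for i
  proof -
    have "finite (ksupp (cs i))" by (rule finite_subset[OF supp Sfin])
    then show ?thesis using supp[of i] SF[of i] unfolding kcoeffs_def by blast
  qed
  have Geq: "G (ksupp (cs i)) (cs i) x = (\<Sum>v\<in>W i. v * indicator (A i v) x)" for i x
  proof -
    have "G (ksupp (cs i)) (cs i) x = G (S i) (cs i) x" by (rule G_ext[OF Sfin subset_refl supp])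
    also have "\<dots> = (\<Sum>B\<in>S i. \<Sum>v\<in>W i. if A i v = B then v * indicator (A i v) x else 0)"
      unfolding G_def cs_def sum_distrib_right by (intro sum.cong refl) auto
    also have "\<dots> = (\<Sum>v\<in>W i. \<Sum>B\<in>S i. if A i v = B then v * indicator (A i v) x else 0)"
      by (rule sum.swap)
    also have "\<dots> = (\<Sum>v\<in>W i. v * indicator (A i v) x)"
      using Sfin by (intro sum.cong refl) (auto simp: S_def)
    finally show ?thesis .
  qed
  have AEeq: "AE x in M. G (ksupp (cs i)) (cs i) x = F i x" for i
  proof -
    have "AE x in M. \<forall>v\<in>F i ` space M - W i - {0}. x \<notin> A i v"
    proof (rule AE_finite_allI)
      show "finite (F i ` space M - W i - {0})" using simple_functionD(1)[OF Fs[of i]] by simp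
      fix v assume v: "v \<in> F i ` space M - W i - {0}"
      then have "emeasure M (A i v) = 0" by (auto simp: W_def zero_less_iff_neq_zero)
      then have "A i v \<in> null_sets M" using As by (simp add: null_sets_def)
      then show "AE x in M. x \<notin> A i v" by (rule AE_not_in)
    qed
    from this AE_space show ?thesis
    proof eventually_elim
      case (elim x)
      have "G (ksupp (cs i)) (cs i) x = (\<Sum>v\<in>W i. if F i x = v then v else 0)"
        unfolding Geq using elim(2) by (intro sum.cong refl) (auto simp: A_def)
      also have "\<dots> = (if F i x \<in> W i then F i x else 0)" using Wfin by simp
      also have "\<dots> = F i x" using elim by (auto simp: A_def)
      finally show ?case .
    qed
  qed
  have GL2: "G (ksupp (cs i)) (cs i) \<in> L2 M" for i by (rule G_L2) (use supp SF in blast)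
  have "(\<lambda>i. \<integral>x. (F i x - \<phi> x)\<^sup>2 \<partial>M) \<longlonglongrightarrow> (\<integral>x. 0 \<partial>M)"
  proof (rule integral_dominated_convergence[where w="\<lambda>x. 9 * (\<phi> x)\<^sup>2"])
    show "(\<lambda>x. 0::real) \<in> borel_measurable M" by simp
    show "(\<lambda>x. (F i x - \<phi> x)\<^sup>2) \<in> borel_measurable M" for i by measurable
    show "integrable M (\<lambda>x. 9 * (\<phi> x)\<^sup>2)" using phi by (simp add: L2_def)
    show "AE x in M. (\<lambda>i. (F i x - \<phi> x)\<^sup>2) \<longlonglongrightarrow> 0"
      using AE_space
    proof eventually_elim
      case (elim x)
      have "(\<lambda>i. (F i x - \<phi> x)\<^sup>2) \<longlonglongrightarrow> (\<phi> x - \<phi> x)\<^sup>2" by (intro tendsto_intros Fl elim)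
      then show ?case by simp
    qed
    show "AE x in M. norm ((F i x - \<phi> x)\<^sup>2) \<le> 9 * (\<phi> x)\<^sup>2" for i
      using AE_space
    proof eventually_elim
      case (elim x)
      have "\<bar>F i x\<bar> \<le> 2 * \<bar>\<phi> x\<bar>" using Fb[OF elim, of i] by (simp add: dist_real_def)
      then have "\<bar>F i x - \<phi> x\<bar> \<le> 3 * \<bar>\<phi> x\<bar>" by linarith
      then have "\<bar>F i x - \<phi> x\<bar>\<^sup>2 \<le> (3 * \<bar>\<phi> x\<bar>)\<^sup>2" by (intro power_mono) auto
      then show ?case by (simp add: power_mult_distrib)
    qed
  qed
  moreover have "(\<integral>x. (G (ksupp (cs i)) (cs i) x - \<phi> x)\<^sup>2 \<partial>M) = (\<integral>x. (F i x - \<phi> x)\<^sup>2 \<partial>M)" for i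
  proof (rule integral_cong_AE)
    have [measurable]: "G (ksupp (cs i)) (cs i) \<in> borel_measurable M" using GL2 by (simp add: L2_def)
    show "(\<lambda>x. (G (ksupp (cs i)) (cs i) x - \<phi> x)\<^sup>2) \<in> borel_measurable M" by measurable
    show "(\<lambda>x. (F i x - \<phi> x)\<^sup>2) \<in> borel_measurable M" by measurable
    show "AE x in M. (G (ksupp (cs i)) (cs i) x - \<phi> x)\<^sup>2 = (F i x - \<phi> x)\<^sup>2"
      using AEeq[of i] by eventually_elim simp
  qed
  ultimately show ?thesis using csk by (intro exI[of _ cs]) simp
qed



lemma kc_fin: "c \<in> kcoeffs Y \<Longrightarrow> finite (ksupp c)" and kc_sub: "c \<in> kcoeffs Y \<Longrightarrow> ksupp c \<subseteq> Y"
  by (auto simp: kcoeffs_def)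

lemma kc_norm:
  assumes "c \<in> kcoeffs (Ffin M)"
  shows "kspan_norm2 (Kmu M) c = (\<integral>x. (G (ksupp c) c x)\<^sup>2 \<partial>M)"
  using kn2_ext[OF kc_fin[OF assms] subset_refl] G_sq_int[OF kc_fin[OF assms] kc_sub[OF assms]]
  by simp

lemma kc_fun:
  assumes "c \<in> kcoeffs (Ffin M)" "B \<in> Ffin M"
  shows "kspan_fun (Kmu M) c B = (LINT x:B|M. G (ksupp c) c x)"
  using kfun_ext[OF kc_fin[OF assms(1)] subset_refl] G_set_int[OF kc_fin[OF assms(1)] kc_sub[OF assms(1)] assms(2)]
  by simp

lemma kc_diff:
  assumes c: "c \<in> kcoeffs (Ffin M)" and d: "d \<in> kcoeffs (Ffin M)"
  shows "kspan_norm2 (Kmu M) (\<lambda>y. c y - d y) = (\<integral>x. (G (ksupp c) c x - G (ksupp d) d x)\<^sup>2 \<partial>M)"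
proof -
  define S where "S = ksupp c \<union> ksupp d"
  have Sf: "finite S" using kc_fin[OF c] kc_fin[OF d] by (simp add: S_def)
  have SF: "S \<subseteq> Ffin M" using kc_sub[OF c] kc_sub[OF d] by (simp add: S_def)
  have sd: "ksupp (\<lambda>y. c y - d y) \<subseteq> S" by (auto simp: S_def ksupp_def)
  have "kspan_norm2 (Kmu M) (\<lambda>y. c y - d y) = (\<integral>x. (G S (\<lambda>y. c y - d y) x)\<^sup>2 \<partial>M)"
    using kn2_ext[OF Sf sd] G_sq_int[OF Sf SF] by simp
  also have "\<dots> = (\<integral>x. (G (ksupp c) c x - G (ksupp d) d x)\<^sup>2 \<partial>M)"
  proof -
    have "G (ksupp c) c x = G S c x" for x by (rule G_ext[OF Sf subset_refl]) (simp add: S_def)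
    moreover have "G (ksupp d) d x = G S d x" for x by (rule G_ext[OF Sf subset_refl]) (simp add: S_def)
    ultimately show ?thesis unfolding G_diff by simp
  qed
  finally show ?thesis .
qed

lemma kc_L2: "c \<in> kcoeffs (Ffin M) \<Longrightarrow> G (ksupp c) c \<in> L2 M"
  by (rule G_L2[OF kc_sub])

lemma approx_limit:
  assumes ap: "rkhs_approx (Kmu M) (Ffin M) cs \<Phi>"
  shows "\<exists>h\<in>L2 M. (\<lambda>n. \<integral>x. (G (ksupp (cs n)) (cs n) x - h x)\<^sup>2 \<partial>M) \<longlonglongrightarrow> 0 \<and>
            (\<forall>A\<in>Ffin M. \<Phi> A = (LINT x:A|M. h x))"
proof -
  have ck: "cs n \<in> kcoeffs (Ffin M)" for n using ap by (simp add: rkhs_approx_def)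
  define g where "g n = G (ksupp (cs n)) (cs n)" for n
  have gL: "g n \<in> L2 M" for n unfolding g_def by (rule kc_L2[OF ck])
  have "\<exists>h\<in>L2 M. (\<lambda>n. \<integral>x. (g n x - h x)\<^sup>2 \<partial>M) \<longlonglongrightarrow> 0"
  proof (rule L2_complete[OF gL])
    fix e :: real assume e: "e > 0"
    then obtain N where N: "\<forall>m\<ge>N. \<forall>n\<ge>N. sqrt (kspan_norm2 (Kmu M) (\<lambda>y. cs m y - cs n y)) < sqrt e"
      using ap unfolding rkhs_approx_def by (meson real_sqrt_gt_zero)
    show "\<exists>N. \<forall>m\<ge>N. \<forall>n\<ge>N. (\<integral>x. (g m x - g n x)\<^sup>2 \<partial>M) < e"
    proof (intro exI allI impI)
      fix m n assume "m \<ge> N" "n \<ge> N"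
      then have "sqrt (kspan_norm2 (Kmu M) (\<lambda>y. cs m y - cs n y)) < sqrt e" using N by blast
      then have "kspan_norm2 (Kmu M) (\<lambda>y. cs m y - cs n y) < e" by simp
      then show "(\<integral>x. (g m x - g n x)\<^sup>2 \<partial>M) < e" using kc_diff[OF ck ck] by (simp add: g_def)
    qed
  qed
  then obtain h where h: "h \<in> L2 M" and hl: "(\<lambda>n. \<integral>x. (g n x - h x)\<^sup>2 \<partial>M) \<longlonglongrightarrow> 0" by blast
  have "\<Phi> A = (LINT x:A|M. h x)" if A: "A \<in> Ffin M" for A
  proof -
    have "(\<lambda>n. kspan_fun (Kmu M) (cs n) A) \<longlonglongrightarrow> \<Phi> A" using ap A by (simp add: rkhs_approx_def)
    moreover have "(\<lambda>n. kspan_fun (Kmu M) (cs n) A) \<longlonglongrightarrow> (LINT x:A|M. h x)"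
      unfolding kc_fun[OF ck A] g_def[symmetric]
      by (rule L2_conv_set[OF h gL hl]) (use A in \<open>auto simp: Ffin_def\<close>)
    ultimately show ?thesis by (rule LIMSEQ_unique)
  qed
  with h hl show ?thesis unfolding g_def by blast
qed

lemma exists_approx:
  assumes phi: "\<phi> \<in> L2 M" and rep: "\<forall>A\<in>Ffin M. \<Phi> A = (LINT x:A|M. \<phi> x)"
  shows "\<exists>cs. rkhs_approx (Kmu M) (Ffin M) cs \<Phi>"
proof -
  obtain cs where ck: "\<And>n. cs n \<in> kcoeffs (Ffin M)"
    and dl: "(\<lambda>n. \<integral>x. (G (ksupp (cs n)) (cs n) x - \<phi> x)\<^sup>2 \<partial>M) \<longlonglongrightarrow> 0"
    using L2_approx[OF phi] by blast
  define g where "g n = G (ksupp (cs n)) (cs n)" for n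
  have gL: "g n \<in> L2 M" for n unfolding g_def by (rule kc_L2[OF ck])
  have d: "(\<lambda>n. \<integral>x. (g n x - \<phi> x)\<^sup>2 \<partial>M) \<longlonglongrightarrow> 0" using dl by (simp add: g_def)
  have "rkhs_approx (Kmu M) (Ffin M) cs \<Phi>"
    unfolding rkhs_approx_def
  proof (intro conjI allI impI ballI)
    show "cs n \<in> kcoeffs (Ffin M)" for n by (rule ck)
    fix e :: real assume e: "e > 0"
    have "\<forall>\<^sub>F n in sequentially. (\<integral>x. (g n x - \<phi> x)\<^sup>2 \<partial>M) < e\<^sup>2 / 4"
      by (rule order_tendstoD(2)[OF d]) (use e in simp)
    then obtain N where N: "\<And>n. n \<ge> N \<Longrightarrow> (\<integral>x. (g n x - \<phi> x)\<^sup>2 \<partial>M) < e\<^sup>2 / 4"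
      by (auto simp: eventually_sequentially)
    show "\<exists>N. \<forall>m\<ge>N. \<forall>n\<ge>N. sqrt (kspan_norm2 (Kmu M) (\<lambda>y. cs m y - cs n y)) < e"
    proof (intro exI allI impI)
      fix m n assume m: "m \<ge> N" and n: "n \<ge> N"
      have "kspan_norm2 (Kmu M) (\<lambda>y. cs m y - cs n y) = (\<integral>x. (g m x - g n x)\<^sup>2 \<partial>M)"
        using kc_diff[OF ck ck] by (simp add: g_def)
      also have "\<dots> \<le> 2 * (\<integral>x. (g m x - \<phi> x)\<^sup>2 \<partial>M) + 2 * (\<integral>x. (\<phi> x - g n x)\<^sup>2 \<partial>M)"
        by (rule L2_sq_tri'[OF gL phi gL])
      also have "(\<integral>x. (\<phi> x - g n x)\<^sup>2 \<partial>M) = (\<integral>x. (g n x - \<phi> x)\<^sup>2 \<partial>M)"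
        by (simp add: power2_commute)
      also have "2 * (\<integral>x. (g m x - \<phi> x)\<^sup>2 \<partial>M) + 2 * (\<integral>x. (g n x - \<phi> x)\<^sup>2 \<partial>M) < e\<^sup>2"
        using N[OF m] N[OF n] by simp
      finally have "kspan_norm2 (Kmu M) (\<lambda>y. cs m y - cs n y) < e\<^sup>2" .
      then have "sqrt (kspan_norm2 (Kmu M) (\<lambda>y. cs m y - cs n y)) < sqrt (e\<^sup>2)" by (rule real_sqrt_less_mono)
      then show "sqrt (kspan_norm2 (Kmu M) (\<lambda>y. cs m y - cs n y)) < e" using e by simp
    qed
  next
    fix A assume A: "A \<in> Ffin M"
    have "(\<lambda>n. LINT x:A|M. g n x) \<longlonglongrightarrow> (LINT x:A|M. \<phi> x)"
      by (rule L2_conv_set[OF phi gL d]) (use A in \<open>auto simp: Ffin_def\<close>)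
    then show "(\<lambda>n. kspan_fun (Kmu M) (cs n) A) \<longlonglongrightarrow> \<Phi> A"
      using kc_fun[OF ck A] rep A by (simp add: g_def)
  qed
  then show ?thesis by blast
qed

lemma norm_limit:
  assumes phi: "\<phi> \<in> L2 M" and rep: "\<forall>A\<in>Ffin M. \<Phi> A = (LINT x:A|M. \<phi> x)"
    and ap: "rkhs_approx (Kmu M) (Ffin M) cs \<Phi>"
  shows "(\<lambda>n. sqrt (kspan_norm2 (Kmu M) (cs n))) \<longlonglongrightarrow> L2_norm_of M \<phi>"
proof -
  have ck: "cs n \<in> kcoeffs (Ffin M)" for n using ap by (simp add: rkhs_approx_def)
  define g where "g n = G (ksupp (cs n)) (cs n)" for n
  have gL: "g n \<in> L2 M" for n unfolding g_def by (rule kc_L2[OF ck])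
  obtain h where h: "h \<in> L2 M" and hl: "(\<lambda>n. \<integral>x. (g n x - h x)\<^sup>2 \<partial>M) \<longlonglongrightarrow> 0"
    and hrep: "\<forall>A\<in>Ffin M. \<Phi> A = (LINT x:A|M. h x)"
    using approx_limit[OF ap] unfolding g_def by blast
  have z: "(\<integral>x. (h x - \<phi> x)\<^sup>2 \<partial>M) = 0"
  proof (rule L2_unique[OF L2_diff[OF h phi]])
    fix B assume B: "B \<in> Ffin M"
    have iB: "indicator B \<in> L2 M" using B by (intro L2_indicator) (auto simp: Ffin_def)
    have "(LINT x:B|M. h x - \<phi> x) = (LINT x:B|M. h x) - (LINT x:B|M. \<phi> x)"
      unfolding set_lebesgue_integral_def
      using L2_mult_int[OF iB h] L2_mult_int[OF iB phi] by (simp add: right_diff_distrib)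
    then show "(LINT x:B|M. h x - \<phi> x) = 0" using rep hrep B by simp
  qed
  have d: "(\<lambda>n. \<integral>x. (g n x - \<phi> x)\<^sup>2 \<partial>M) \<longlonglongrightarrow> 0"
  proof (rule tendsto_sandwich[of "\<lambda>_. 0" _ _ "\<lambda>n. 2 * (\<integral>x. (g n x - h x)\<^sup>2 \<partial>M)"])
    show "\<forall>\<^sub>F n in sequentially. 0 \<le> (\<integral>x. (g n x - \<phi> x)\<^sup>2 \<partial>M)" by simp
    show "\<forall>\<^sub>F n in sequentially. (\<integral>x. (g n x - \<phi> x)\<^sup>2 \<partial>M) \<le> 2 * (\<integral>x. (g n x - h x)\<^sup>2 \<partial>M)"
      using L2_sq_tri'[OF gL h phi] z by simp
    show "(\<lambda>n. 0) \<longlonglongrightarrow> (0::real)" by simp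
    show "(\<lambda>n. 2 * (\<integral>x. (g n x - h x)\<^sup>2 \<partial>M)) \<longlonglongrightarrow> 0" using tendsto_mult[OF tendsto_const hl, of 2] by simp
  qed
  have "(\<lambda>n. \<integral>x. (g n x)\<^sup>2 \<partial>M) \<longlonglongrightarrow> (\<integral>x. (\<phi> x)\<^sup>2 \<partial>M)" by (rule L2_conv_norm[OF phi gL d])
  then have "(\<lambda>n. sqrt (\<integral>x. (g n x)\<^sup>2 \<partial>M)) \<longlonglongrightarrow> sqrt (\<integral>x. (\<phi> x)\<^sup>2 \<partial>M)" by (rule tendsto_real_sqrt)
  then show ?thesis using kc_norm[OF ck] by (simp add: g_def L2_norm_of_def)
qed

theorem lemma4p3:
  fixes M :: "'a measure" and \<Phi> :: "'a set \<Rightarrow> real"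
  assumes "sigma_finite_measure M"
  shows "(in_RKHS (Kmu M) (Ffin M) \<Phi> \<longleftrightarrow>
            (\<exists>\<phi>\<in>L2 M. \<forall>A\<in>Ffin M. \<Phi> A = (LINT x:A|M. \<phi> x)))
       \<and> (\<forall>\<phi>\<in>L2 M. (\<forall>A\<in>Ffin M. \<Phi> A = (LINT x:A|M. \<phi> x)) \<longrightarrow>
            rkhs_norm (Kmu M) (Ffin M) \<Phi> = L2_norm_of M \<phi>)"
proof (intro conjI iffI ballI impI)
  assume "in_RKHS (Kmu M) (Ffin M) \<Phi>"
  then obtain cs where "rkhs_approx (Kmu M) (Ffin M) cs \<Phi>" by (auto simp: in_RKHS_def)
  from approx_limit[OF this] show "\<exists>\<phi>\<in>L2 M. \<forall>A\<in>Ffin M. \<Phi> A = (LINT x:A|M. \<phi> x)" by blast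
next
  assume "\<exists>\<phi>\<in>L2 M. \<forall>A\<in>Ffin M. \<Phi> A = (LINT x:A|M. \<phi> x)"
  then show "in_RKHS (Kmu M) (Ffin M) \<Phi>" using exists_approx by (auto simp: in_RKHS_def)
next
  fix \<phi> assume phi: "\<phi> \<in> L2 M" and rep: "\<forall>A\<in>Ffin M. \<Phi> A = (LINT x:A|M. \<phi> x)"
  obtain cs0 where cs0: "rkhs_approx (Kmu M) (Ffin M) cs0 \<Phi>" using exists_approx[OF phi rep] by blast
  show "rkhs_norm (Kmu M) (Ffin M) \<Phi> = L2_norm_of M \<phi>"
    unfolding rkhs_norm_def
  proof (rule the_equality)
    show "\<forall>cs. rkhs_approx (Kmu M) (Ffin M) cs \<Phi> \<longrightarrow>
        (\<lambda>n. sqrt (kspan_norm2 (Kmu M) (cs n))) \<longlonglongrightarrow> L2_norm_of M \<phi>"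
      using norm_limit[OF phi rep] by blast
    fix r assume "\<forall>cs. rkhs_approx (Kmu M) (Ffin M) cs \<Phi> \<longrightarrow> (\<lambda>n. sqrt (kspan_norm2 (Kmu M) (cs n))) \<longlonglongrightarrow> r"
    then have "(\<lambda>n. sqrt (kspan_norm2 (Kmu M) (cs0 n))) \<longlonglongrightarrow> r" using cs0 by blast
    moreover have "(\<lambda>n. sqrt (kspan_norm2 (Kmu M) (cs0 n))) \<longlonglongrightarrow> L2_norm_of M \<phi>" by (rule norm_limit[OF phi rep cs0])
    ultimately show "r = L2_norm_of M \<phi>" by (rule LIMSEQ_unique)
  qed
qed

end
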